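(* Let $T_1,T_2\subseteq\mathbb{R}^n$ be action sets. Then $T_1\subseteq T_2$ if and only if $\mathbf{W}(T_1)\supseteq\mathbf{W}(T_2)$, where $\mathbf{W}(T)=\bigcap_{t\in T}\mathbf{W}(t)$.
   Context: Single-commodity network pricing setting: $G=(\mathcal{V},\mathcal{A})$ directed graph, arc costs $c\ge0$, nonempty tolled arc set $\mathcal{A}_1\subsetneq\mathcal{A}$, $n=|\mathcal{A}_1|$, $N$ node–arc incidence matrix, single origin $o$ and destination $d$ connected by a toll-free path, $b_o=1$, $b_d=-1$, $b_i=0$ otherwise, $\mathcal{X}=\{x\in\mathbb{R}^{\mathcal{A}}: Nx=b,\ x\ge0\}$, $x_{\mathcal{A}_1}$ the restriction of $x$ to $\mathcal{A}_1$. Let $f(t)=\min\{c^\top x+t^\top x_{\mathcal{A}_1}: x\in\mathcal{X}\}$ for $t\in\mathbb{R}^n$, $t\ge0$, and $f(t)=-\infty$ otherwise. An action set is a set $T=\{t:(t,z)\in F\text{ for some }z\}$ where $F$ is a face of $\operatorname{epi}(-f)$ whose affine hull's direction space does not contain $(0,1)$. For $t\ge0$, $\mathbf{W}(t)$ is the set of $w$ such that $(w,x)$ is optimal for some $x$ in $\min_{w,x}\{c^\top x+t^\top w: x_{\mathcal{A}_1}\le w,\ Nx=b,\ w\ge0,\ x\ge0\}$. *)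

theory Defs
  imports "HOL-Analysis.Analysis"
begin

(* Graph: arcs are the elements of the finite type 'a (A = UNIV), vertices the
   elements of 'v; arc e goes from src e to tgt e.  Tolled arcs A1 = range emb,
   where emb :: 't => 'a is injective, so R^n = real^'t with n = CARD('t). *)

definition flow_set ::
  "('a::finite \<Rightarrow> 'v) \<Rightarrow> ('a \<Rightarrow> 'v) \<Rightarrow> 'v \<Rightarrow> 'v \<Rightarrow> (real^'a) set" where
  "flow_set src tgt orig dest =
     {x. (\<forall>i. (\<Sum>e\<in>{e. src e = i}. x$e) - (\<Sum>e\<in>{e. tgt e = i}. x$e)
              = (if i = orig then 1 else if i = dest then -1 else 0))
         \<and> (\<forall>e. 0 \<le> x$e)}"

definition restr :: "('t::finite \<Rightarrow> 'a::finite) \<Rightarrow> real^'a \<Rightarrow> real^'t" where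
  "restr emb x = (\<chi> k. x $ emb k)"

definition follower_val ::
  "real^'a \<Rightarrow> ('a::finite \<Rightarrow> 'v) \<Rightarrow> ('a \<Rightarrow> 'v) \<Rightarrow> 'v \<Rightarrow> 'v \<Rightarrow> ('t::finite \<Rightarrow> 'a)
     \<Rightarrow> real^'t \<Rightarrow> ereal" where
  "follower_val c src tgt orig dest emb t =
     (if (\<forall>k. 0 \<le> t$k)
      then Inf {ereal (c \<bullet> x + t \<bullet> restr emb x) | x. x \<in> flow_set src tgt orig dest}
      else -\<infinity>)"

definition epi_neg_f ::
  "real^'a \<Rightarrow> ('a::finite \<Rightarrow> 'v) \<Rightarrow> ('a \<Rightarrow> 'v) \<Rightarrow> 'v \<Rightarrow> 'v \<Rightarrow> ('t::finite \<Rightarrow> 'a)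
     \<Rightarrow> ((real^'t) \<times> real) set" where
  "epi_neg_f c src tgt orig dest emb =
     {(t, z). - follower_val c src tgt orig dest emb t \<le> ereal z}"

definition aff_dir :: "'b::real_vector set \<Rightarrow> 'b set" where
  "aff_dir S = {y - x | x y. x \<in> affine hull S \<and> y \<in> affine hull S}"

definition action_set ::
  "real^'a \<Rightarrow> ('a::finite \<Rightarrow> 'v) \<Rightarrow> ('a \<Rightarrow> 'v) \<Rightarrow> 'v \<Rightarrow> 'v \<Rightarrow> ('t::finite \<Rightarrow> 'a)
     \<Rightarrow> ((real^'t) set) \<Rightarrow> bool" where
  "action_set c src tgt orig dest emb T \<longleftrightarrow>
     (\<exists>F. F face_of epi_neg_f c src tgt orig dest emb
          \<and> (0::real^'t, 1::real) \<notin> aff_dir F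
          \<and> T = {t. \<exists>z. (t, z) \<in> F})"

(* feasibility for  min { c^T x + t^T w : x_{A1} <= w, N x = b, w >= 0, x >= 0 } *)
definition W_feasible ::
  "('a::finite \<Rightarrow> 'v) \<Rightarrow> ('a \<Rightarrow> 'v) \<Rightarrow> 'v \<Rightarrow> 'v \<Rightarrow> ('t::finite \<Rightarrow> 'a)
     \<Rightarrow> real^'t \<Rightarrow> real^'a \<Rightarrow> bool" where
  "W_feasible src tgt orig dest emb w x \<longleftrightarrow>
     x \<in> flow_set src tgt orig dest \<and> (\<forall>k. restr emb x $ k \<le> w $ k) \<and> (\<forall>k. 0 \<le> w $ k)"

definition W_of ::
  "real^'a \<Rightarrow> ('a::finite \<Rightarrow> 'v) \<Rightarrow> ('a \<Rightarrow> 'v) \<Rightarrow> 'v \<Rightarrow> 'v \<Rightarrow> ('t::finite \<Rightarrow> 'a)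
     \<Rightarrow> real^'t \<Rightarrow> ((real^'t) set)" where
  "W_of c src tgt orig dest emb t =
     {w. \<exists>x. W_feasible src tgt orig dest emb w x
            \<and> (\<forall>w' x'. W_feasible src tgt orig dest emb w' x' \<longrightarrow>
                  c \<bullet> x + t \<bullet> w \<le> c \<bullet> x' + t \<bullet> w')}"

(* W(T) = intersection of W(t) over t in T (UNIV for T empty) *)
definition W_set ::
  "real^'a \<Rightarrow> ('a::finite \<Rightarrow> 'v) \<Rightarrow> ('a \<Rightarrow> 'v) \<Rightarrow> 'v \<Rightarrow> 'v \<Rightarrow> ('t::finite \<Rightarrow> 'a)
     \<Rightarrow> ((real^'t) set) \<Rightarrow> ((real^'t) set)" where
  "W_set c src tgt orig dest emb T = (\<Inter>t\<in>T. W_of c src tgt orig dest emb t)"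

end

theory Submission
  imports Defs
begin


definition supp :: "real^'a::finite \<Rightarrow> 'a set" where "supp x = {e. x$e \<noteq> 0}"

definition netf :: "('a::finite \<Rightarrow> 'v) \<Rightarrow> ('a \<Rightarrow> 'v) \<Rightarrow> real^'a \<Rightarrow> 'v \<Rightarrow> real" where
  "netf src tgt x i = (\<Sum>e\<in>{e. src e = i}. x$e) - (\<Sum>e\<in>{e. tgt e = i}. x$e)"

lemma netf_lin: "netf src tgt (a *\<^sub>R x + b *\<^sub>R y) i = a * netf src tgt x i + b * netf src tgt y i"
  by (simp add: netf_def sum.distrib sum_distrib_left algebra_simps)

lemma flow_set_iff: "x \<in> flow_set src tgt orig dest \<longleftrightarrow>
   (\<forall>i. netf src tgt x i = (if i = orig then 1 else if i = dest then -1 else 0)) \<and> (\<forall>e. 0 \<le> x$e)"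
  by (simp add: flow_set_def netf_def)

lemma flow_comb_mem:
  assumes "x \<in> flow_set src tgt orig dest" "y \<in> flow_set src tgt orig dest" "a + b = 1"
    "\<forall>e. 0 \<le> (a *\<^sub>R x + b *\<^sub>R y)$e"
  shows "a *\<^sub>R x + b *\<^sub>R y \<in> flow_set src tgt orig dest"
proof -
  have "netf src tgt (a *\<^sub>R x + b *\<^sub>R y) i = (if i = orig then 1 else if i = dest then -1 else 0)" for i
  proof -
    define r where "r = (if i = orig then 1 else if i = dest then -1 else (0::real))"
    have "netf src tgt x i = r" "netf src tgt y i = r" using assms(1,2) by (auto simp: flow_set_iff r_def)
    then have "netf src tgt (a *\<^sub>R x + b *\<^sub>R y) i = (a + b) * r" by (simp add: netf_lin distrib_right)
    then show ?thesis using assms(3) by (simp add: r_def)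
  qed
  then show ?thesis using assms(4) by (simp add: flow_set_iff)
qed

lemma flow_comb:
  assumes X: "x \<in> flow_set src tgt orig dest" and Y: "y \<in> flow_set src tgt orig dest"
    and sub: "supp y \<subseteq> supp x" and e0: "y$e0 > x$e0"
  shows "\<exists>z s. z \<in> flow_set src tgt orig dest \<and> supp z \<subset> supp x \<and> s > 0 \<and> (1+s) *\<^sub>R x = z + s *\<^sub>R y"
proof -
  have xn: "\<forall>e. 0 \<le> x$e" using X by (simp add: flow_set_iff)
  have yn: "\<forall>e. 0 \<le> y$e" using Y by (simp add: flow_set_iff)
  define D where "D = {e. y$e > x$e}"
  define r where "r = (\<lambda>e. x$e / (y$e - x$e))"
  have fD: "finite D" "D \<noteq> {}" using e0 by (auto simp: D_def)
  define s where "s = Min (r ` D)"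
  have "s \<in> r ` D" unfolding s_def using fD by (intro Min_in) auto
  then obtain e1 where e1: "e1 \<in> D" "s = r e1" by auto
  have xpos: "x$e > 0" if "e \<in> D" for e
  proof -
    have "y$e > 0" using that yn xn by (auto simp: D_def intro: le_less_trans)
    then have "e \<in> supp y" by (auto simp: supp_def)
    then have "e \<in> supp x" using sub by blast
    then show ?thesis using xn by (auto simp: supp_def order_le_less)
  qed
  have rpos: "r e > 0" if "e \<in> D" for e using xpos[OF that] that by (auto simp: r_def D_def)
  have spos: "s > 0" using e1 rpos by auto
  have sle: "s \<le> r e" if "e \<in> D" for e using fD that by (auto simp: s_def)
  define z where "z = (1+s) *\<^sub>R x + (-s) *\<^sub>R y"
  have zn: "\<forall>e. 0 \<le> z$e"
  proof
    fix e
    show "0 \<le> z$e"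
    proof (cases "e \<in> D")
      case True
      then have "s * (y$e - x$e) \<le> x$e" using sle[OF True] by (auto simp: r_def D_def field_simps)
      then show ?thesis by (simp add: z_def algebra_simps)
    next
      case False
      then have "y$e \<le> x$e" by (auto simp: D_def)
      then show ?thesis using spos xn by (simp add: z_def algebra_simps) (smt (verit) mult_left_mono)
    qed
  qed
  have zX: "z \<in> flow_set src tgt orig dest" unfolding z_def
    by (rule flow_comb_mem[OF X Y]) (use zn z_def in auto)
  have z1: "z$e1 = 0" using e1 xpos[OF e1(1)] by (auto simp: z_def r_def D_def field_simps)
  have "supp z \<subseteq> supp x" using sub by (auto simp: supp_def z_def)
  moreover have "e1 \<in> supp x" "e1 \<notin> supp z" using z1 xpos[OF e1(1)] by (auto simp: supp_def)
  ultimately have "supp z \<subset> supp x" by blast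
  moreover have "(1+s) *\<^sub>R x = z + s *\<^sub>R y" by (simp add: z_def)
  ultimately show ?thesis using zX spos by blast
qed


lemma netf_axis: "netf src tgt (x + axis e 1) i = netf src tgt x i + (if src e = i then 1 else 0) - (if tgt e = i then 1 else 0)"
proof -
  have a: "(\<Sum>e'\<in>{e'. P e'}. (axis e (1::real))$e') = (if P e then 1 else 0)" for P :: "'a \<Rightarrow> bool"
    by (simp add: axis_def sum.delta')
  show ?thesis unfolding netf_def by (simp add: sum.distrib a[of "\<lambda>e'. src e' = i"] a[of "\<lambda>e'. tgt e' = i"])
qed

lemma walk_flow:
  assumes "(a, b) \<in> {(src e, tgt e) | e. P e}\<^sup>*"
  shows "\<exists>x. (\<forall>e. 0 \<le> x$e) \<and> (\<forall>i. netf src tgt x i = (if i = a then 1 else 0) - (if i = b then 1 else 0))"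
  using assms
proof (induction rule: rtrancl_induct)
  case base
  show ?case by (rule exI[of _ 0]) (simp add: netf_def)
next
  case (step b c)
  then obtain x where x: "\<forall>e. 0 \<le> x$e" "\<forall>i. netf src tgt x i = (if i = a then 1 else 0) - (if i = b then 1 else 0)" by blast
  from step(2) obtain e where e: "b = src e" "c = tgt e" by blast
  have "\<forall>i. netf src tgt (x + axis e 1) i = (if i = a then 1 else 0) - (if i = c then 1 else 0)"
    using x(2) e by (simp add: netf_axis)
  moreover have "\<forall>e'. 0 \<le> (x + axis e 1)$e'" using x(1) by (simp add: axis_def)
  ultimately show ?case by blast
qed


locale netw =
  fixes c :: "real^'a::finite" and src tgt :: "'a \<Rightarrow> 'v" and orig dest :: 'v
    and emb :: "'t::finite \<Rightarrow> 'a"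
  assumes c_nn: "\<forall>e. 0 \<le> c$e" and inj: "inj emb" and od: "orig \<noteq> dest"
    and path: "(orig, dest) \<in> {(src e, tgt e) | e. e \<notin> range emb}\<^sup>*"
begin

abbreviation "X \<equiv> flow_set src tgt orig dest"

definition "V = {x \<in> X. \<forall>y\<in>X. supp y \<subseteq> supp x \<longrightarrow> supp y = supp x}"

lemma X_ne: "X \<noteq> {}"
proof -
  obtain x where x: "\<forall>e. 0 \<le> x$e" "\<forall>i. netf src tgt x i = (if i = orig then 1 else 0) - (if i = dest then 1 else 0)"
    using walk_flow[OF path] by blast
  have "x \<in> X" using x od by (auto simp: flow_set_iff)
  then show ?thesis by blast
qed

lemma V_sub: "V \<subseteq> X" by (auto simp: V_def)

lemma V_finite: "finite V"
proof -
  have "inj_on supp V"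
  proof (rule inj_onI, rule ccontr)
    fix x y assume xV: "x \<in> V" and yV: "y \<in> V" and eq: "supp x = supp y" and ne: "x \<noteq> y"
    then obtain e where "x$e \<noteq> y$e" by (auto simp: vec_eq_iff)
    then consider "y$e > x$e" | "x$e > y$e" by linarith
    then show False
    proof cases
      case 1
      then obtain z where "z \<in> X" "supp z \<subset> supp x"
        using flow_comb[of x src tgt orig dest y e] xV yV eq by (auto simp: V_def)
      then show False using xV by (auto simp: V_def)
    next
      case 2
      then obtain z where "z \<in> X" "supp z \<subset> supp y"
        using flow_comb[of y src tgt orig dest x e] xV yV eq by (auto simp: V_def)
      then show False using yV by (auto simp: V_def)
    qed
  qed
  moreover have "finite (supp ` V)" by simp
  ultimately show ?thesis using finite_imageD by blast
qed

lemma inner_mono_nn: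
  fixes q x y :: "real^'b::finite"
  assumes "\<forall>e. 0 \<le> q$e" "\<forall>e. y$e \<le> x$e"
  shows "q \<bullet> y \<le> q \<bullet> x"
  unfolding inner_vec_def using assms by (auto intro!: sum_mono mult_left_mono)

lemma V_below:
  assumes q: "\<forall>e. 0 \<le> q$e" and xX: "x \<in> X"
  shows "\<exists>v\<in>V. q \<bullet> v \<le> q \<bullet> x"
  using xX
proof (induction "card (supp x)" arbitrary: x rule: less_induct)
  case less
  show ?case
  proof (cases "x \<in> V")
    case True then show ?thesis by blast
  next
    case False
    then obtain y where yX: "y \<in> X" and sub: "supp y \<subset> supp x" using less.prems by (auto simp: V_def)
    have cy: "card (supp y) < card (supp x)" using sub by (simp add: psubset_card_mono)
    show ?thesis
    proof (cases "\<exists>e. y$e > x$e")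
      case True
      then obtain e where "y$e > x$e" by blast
      then obtain z s where z: "z \<in> X" "supp z \<subset> supp x" "s > 0" "(1+s) *\<^sub>R x = z + s *\<^sub>R y"
        using flow_comb[OF less.prems yX] sub by blast
      have cz: "card (supp z) < card (supp x)" using z(2) by (simp add: psubset_card_mono)
      obtain v1 where v1: "v1 \<in> V" "q \<bullet> v1 \<le> q \<bullet> z" using less.hyps[OF cz z(1)] by blast
      obtain v2 where v2: "v2 \<in> V" "q \<bullet> v2 \<le> q \<bullet> y" using less.hyps[OF cy yX] by blast
      have "(1+s) * (q \<bullet> x) = q \<bullet> z + s * (q \<bullet> y)"
        using arg_cong[OF z(4), of "\<lambda>u. q \<bullet> u"] by (simp add: inner_add_right)
      show ?thesis
      proof (cases "q \<bullet> v1 \<le> q \<bullet> v2")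
        case True
        have "(1+s) * (q \<bullet> v1) \<le> (1+s) * (q \<bullet> x)"
        proof -
          have "q \<bullet> v1 \<le> q \<bullet> y" "q \<bullet> v1 \<le> q \<bullet> z" using v1 v2 True by linarith+
          then have "s * (q \<bullet> v1) \<le> s * (q \<bullet> y)" using z(3) by (simp add: mult_left_mono)
          then show ?thesis using \<open>(1+s) * (q \<bullet> x) = _\<close> \<open>q \<bullet> v1 \<le> q \<bullet> z\<close> by (simp add: algebra_simps)
        qed
        then have "q \<bullet> v1 \<le> q \<bullet> x" using z(3) by simp
        then show ?thesis using v1 by blast
      next
        case False
        have "(1+s) * (q \<bullet> v2) \<le> (1+s) * (q \<bullet> x)"
        proof -
          have "q \<bullet> v2 \<le> q \<bullet> y" "q \<bullet> v2 \<le> q \<bullet> z" using v1 v2 False by linarith+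
          then have "s * (q \<bullet> v2) \<le> s * (q \<bullet> y)" using z(3) by (simp add: mult_left_mono)
          then show ?thesis using \<open>(1+s) * (q \<bullet> x) = _\<close> \<open>q \<bullet> v2 \<le> q \<bullet> z\<close> by (simp add: algebra_simps)
        qed
        then have "q \<bullet> v2 \<le> q \<bullet> x" using z(3) by simp
        then show ?thesis using v2 by blast
      qed
    next
      case False
      then have "q \<bullet> y \<le> q \<bullet> x" using q by (intro inner_mono_nn) (auto simp: not_less)
      moreover obtain v where "v \<in> V" "q \<bullet> v \<le> q \<bullet> y" using less.hyps[OF cy yX] by blast
      ultimately show ?thesis using order_trans by blast
    qed
  qed
qed

lemma V_ne: "V \<noteq> {}"
  using X_ne V_below[of 0] by auto


definition "obj t x = c \<bullet> x + t \<bullet> restr emb x"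
definition "m t = Min (obj t ` V)"
definition "tlift t = (\<chi> e. if e \<in> range emb then t$(inv emb e) else 0)"

lemma restr_inner: "t \<bullet> restr emb x = tlift t \<bullet> x"
proof -
  have "tlift t \<bullet> x = (\<Sum>e\<in>UNIV. if e \<in> range emb then t$(inv emb e) * x$e else 0)"
    unfolding inner_vec_def tlift_def by (auto intro!: sum.cong)
  also have "\<dots> = (\<Sum>e\<in>range emb. t$(inv emb e) * x$e)"
    by (simp add: sum.If_cases)
  also have "\<dots> = (\<Sum>k\<in>UNIV. t$k * x$(emb k))"
    using inj by (simp add: sum.reindex)
  finally show ?thesis by (simp add: inner_vec_def restr_def)
qed

lemma obj_q: "obj t x = (c + tlift t) \<bullet> x"
  by (simp add: obj_def restr_inner inner_add_left)

lemma q_nn: "\<forall>k. 0 \<le> t$k \<Longrightarrow> \<forall>e. 0 \<le> (c + tlift t)$e"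
  using c_nn by (simp add: tlift_def)

lemma m_le: "v \<in> V \<Longrightarrow> m t \<le> obj t v"
  using V_finite by (simp add: m_def)

lemma m_attained: "\<exists>v\<in>V. obj t v = m t"
proof -
  have "m t \<in> obj t ` V" unfolding m_def using V_finite V_ne by (intro Min_in) auto
  then show ?thesis by auto
qed

lemma obj_ge_m: "\<forall>k. 0 \<le> t$k \<Longrightarrow> x \<in> X \<Longrightarrow> m t \<le> obj t x"
proof -
  assume "\<forall>k. 0 \<le> t$k" "x \<in> X"
  then obtain v where v: "v \<in> V" "(c + tlift t) \<bullet> v \<le> (c + tlift t) \<bullet> x" using V_below[OF q_nn] by blast
  have "m t \<le> obj t v" using m_le[OF v(1)] .
  also have "\<dots> \<le> obj t x" using v(2) by (simp add: obj_q)
  finally show ?thesis .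
qed

lemma fv: "\<forall>k. 0 \<le> t$k \<Longrightarrow> follower_val c src tgt orig dest emb t = ereal (m t)"
proof -
  assume t: "\<forall>k. 0 \<le> t$k"
  let ?S = "{ereal (c \<bullet> x + t \<bullet> restr emb x) | x. x \<in> X}"
  obtain v where v: "v \<in> V" "obj t v = m t" using m_attained by blast
  have "ereal (c \<bullet> v + t \<bullet> restr emb v) \<in> ?S" using v V_sub by blast
  then have "Inf ?S \<le> ereal (m t)"
    using v by (auto simp: obj_def intro: Inf_lower)
  moreover have "ereal (m t) \<le> Inf ?S"
    using obj_ge_m[OF t] by (intro Inf_greatest) (auto simp: obj_def)
  ultimately show ?thesis using t by (simp add: follower_val_def)
qed

abbreviation "E \<equiv> epi_neg_f c src tgt orig dest emb"

lemma E_iff: "(t, z) \<in> E \<longleftrightarrow> (\<forall>k. 0 \<le> t$k) \<and> - m t \<le> z"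
proof (cases "\<forall>k. 0 \<le> t$k")
  case True then show ?thesis by (simp add: epi_neg_f_def fv)
next
  case False then show ?thesis by (auto simp: epi_neg_f_def follower_val_def)
qed

lemma obj_aff: "a + b = 1 \<Longrightarrow> obj (a *\<^sub>R s + b *\<^sub>R s') v = a * obj s v + b * obj s' v"
proof -
  assume "a + b = 1"
  then have "c \<bullet> v = a * (c \<bullet> v) + b * (c \<bullet> v)" by (metis distrib_right mult_1)
  then show ?thesis by (simp add: obj_def inner_add_left algebra_simps)
qed

lemma feas_ge: "\<forall>k. 0 \<le> t$k \<Longrightarrow> W_feasible src tgt orig dest emb w x \<Longrightarrow> m t \<le> c \<bullet> x + t \<bullet> w"
proof -
  assume t: "\<forall>k. 0 \<le> t$k" and f: "W_feasible src tgt orig dest emb w x"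
  have "t \<bullet> restr emb x \<le> t \<bullet> w" using f t by (intro inner_mono_nn) (auto simp: W_feasible_def)
  moreover have "m t \<le> obj t x" using obj_ge_m[OF t] f by (simp add: W_feasible_def)
  ultimately show ?thesis by (simp add: obj_def)
qed

lemma W_in:
  assumes t: "\<forall>k. 0 \<le> t$k" and x: "x \<in> X" "\<forall>k. restr emb x$k \<le> w$k" "\<forall>k. 0 \<le> w$k"
    and eq: "c \<bullet> x + t \<bullet> w = m t"
  shows "w \<in> W_of c src tgt orig dest emb t"
  unfolding W_of_def using x eq feas_ge[OF t] by (auto simp: W_feasible_def)

lemma W_out:
  assumes t: "\<forall>k. 0 \<le> t$k" and w: "w \<in> W_of c src tgt orig dest emb t"
  shows "\<exists>x. W_feasible src tgt orig dest emb w x \<and> c \<bullet> x + t \<bullet> w \<le> m t"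
proof -
  obtain x where x: "W_feasible src tgt orig dest emb w x"
    "\<forall>w' x'. W_feasible src tgt orig dest emb w' x' \<longrightarrow> c \<bullet> x + t \<bullet> w \<le> c \<bullet> x' + t \<bullet> w'"
    using w by (auto simp: W_of_def)
  obtain v where v: "v \<in> V" "obj t v = m t" using m_attained by blast
  have vX: "v \<in> X" using v V_sub by blast
  then have fe: "W_feasible src tgt orig dest emb (restr emb v) v"
    by (auto simp: W_feasible_def restr_def flow_set_def)
  have "c \<bullet> x + t \<bullet> w \<le> m t" using x(2)[rule_format, OF fe] v by (auto simp: obj_def)
  then show ?thesis using x(1) by blast
qed


lemma face_graph:
  assumes F: "F face_of E" and nv: "(0::real^'t, 1::real) \<notin> aff_dir F" and p: "(t, z) \<in> F"
  shows "z = - m t"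
proof (rule ccontr)
  assume ne: "z \<noteq> - m t"
  have "(t, z) \<in> E" using F p face_of_imp_subset by blast
  then have t: "\<forall>k. 0 \<le> t$k" and zge: "- m t \<le> z" by (simp_all add: E_iff)
  define z0 where "z0 = - m t"
  define z2 where "z2 = 2 * z - z0"
  have gt: "z0 < z" using ne zge by (simp add: z0_def)
  have E0: "(t, z0) \<in> E" and E2: "(t, z2) \<in> E" using t gt by (simp_all add: E_iff z0_def z2_def)
  have "(t, z) \<in> open_segment (t, z0) (t, z2)"
    unfolding in_segment(2)
  proof (intro conjI exI[of _ "1/2"])
    show "(t, z0) \<noteq> (t, z2)" using gt by (simp add: z2_def)
    have "z = (1 - 1/2) * z0 + (1/2) * z2" unfolding z2_def by (simp add: field_simps)
    moreover have "t = (1 - 1/2) *\<^sub>R t + (1/2::real) *\<^sub>R t" by (simp add: scaleR_left_distrib[symmetric])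
    ultimately show "(t, z) = (1 - 1/2) *\<^sub>R (t, z0) + (1/2) *\<^sub>R (t, z2)"
      by simp
  qed auto
  then have F0: "(t, z0) \<in> F" and F2: "(t, z2) \<in> F"
    using F E0 E2 p unfolding face_of_def by blast+
  let ?A = "affine hull F"
  have A0: "(t, z0) \<in> ?A" and A2: "(t, z2) \<in> ?A" using F0 F2 by (simp_all add: hull_inc)
  define u where "u = 1 / (z2 - z0)"
  have "(1 - u) *\<^sub>R (t, z0) + u *\<^sub>R (t, z2) \<in> ?A"
  proof -
    have aff: "affine ?A" by simp
    have "\<And>x y a b. x \<in> ?A \<Longrightarrow> y \<in> ?A \<Longrightarrow> a + b = 1 \<Longrightarrow> a *\<^sub>R x + b *\<^sub>R y \<in> ?A"
      using aff unfolding affine_def by blast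
    moreover have "(1 - u) + u = 1" by simp
    ultimately show ?thesis using A0 A2 by blast
  qed
  moreover have "(1 - u) *\<^sub>R (t, z0) + u *\<^sub>R (t, z2) = (t, z0 + 1)"
  proof -
    have "z2 - z0 \<noteq> 0" using gt by (simp add: z2_def)
    then have "u * (z2 - z0) = 1" by (simp add: u_def)
    moreover have "(1 - u) * z0 + u * z2 = z0 + u * (z2 - z0)" by (simp add: algebra_simps)
    ultimately have "(1 - u) * z0 + u * z2 = z0 + 1" by simp
    then show ?thesis by (simp add: scaleR_left_distrib[symmetric])
  qed
  ultimately have A3: "(t, z0 + 1) \<in> ?A" by simp
  have "(0::real^'t, 1::real) = (t, z0 + 1) - (t, z0)" by simp
  then have "(0::real^'t, 1::real) \<in> aff_dir F" unfolding aff_dir_def using A0 A3 by blast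
  then show False using nv by blast
qed


lemma ev_pos: "(A::real) > 0 \<Longrightarrow> \<forall>\<^sub>F e in at_right 0. 0 \<le> A + e * B"
proof -
  assume A: "A > 0"
  have "((\<lambda>e. A + e * B) \<longlongrightarrow> A + 0 * B) (at_right 0)"
    by (intro tendsto_intros)
  then have "\<forall>\<^sub>F e in at_right 0. 0 < A + e * B" using A by (intro order_tendstoD(1)) auto
  then show ?thesis by (auto elim!: eventually_mono)
qed

lemma key:
  assumes F: "F face_of E" and nv: "(0::real^'t, 1::real) \<notin> aff_dir F"
    and T: "T = {t. \<exists>z. (t, z) \<in> F}" and Tne: "T \<noteq> {}"
    and t1: "\<forall>k. 0 \<le> t1$k" and t1T: "t1 \<notin> T"
  shows "\<exists>w. (\<forall>t\<in>T. w \<in> W_of c src tgt orig dest emb t) \<and> w \<notin> W_of c src tgt orig dest emb t1"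
proof -
  have FE: "F \<subseteq> E" using F face_of_imp_subset by blast
  have Tdom: "\<forall>k. 0 \<le> t$k" if "t \<in> T" for t
    using that FE T by (auto simp: E_iff)
  have graph: "(t, - m t) \<in> F" if tT: "t \<in> T" for t
  proof -
    obtain z where z: "(t, z) \<in> F" using tT T by blast
    then show ?thesis using face_graph[OF F nv z] by simp
  qed
  have convF: "convex F" using F face_of_imp_convex by blast
  have comb: "(1-u) *\<^sub>R t + u *\<^sub>R t' \<in> T \<and> m ((1-u) *\<^sub>R t + u *\<^sub>R t') = (1-u) * m t + u * m t'"
    if "t \<in> T" "t' \<in> T" "0 \<le> u" "u \<le> 1" for t t' u
  proof -
    have "(1-u) *\<^sub>R (t, - m t) + u *\<^sub>R (t', - m t') \<in> F"
      using convF graph[OF that(1)] graph[OF that(2)] that(3,4) unfolding convex_alt by blast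
    then have p: "((1-u) *\<^sub>R t + u *\<^sub>R t', - ((1-u) * m t + u * m t')) \<in> F" by (simp add: algebra_simps)
    then have "((1-u) *\<^sub>R t + u *\<^sub>R t') \<in> T" using T by blast
    moreover have "- ((1-u) * m t + u * m t') = - m ((1-u) *\<^sub>R t + u *\<^sub>R t')"
      using face_graph[OF F nv p] .
    ultimately show ?thesis by simp
  qed
  have convT: "convex T" unfolding convex_alt using comb by blast
  obtain t2 where t2: "t2 \<in> rel_interior T" using rel_interior_eq_empty[OF convT] Tne by blast
  have t2T: "t2 \<in> T" using rel_interior_subset t2 by blast
  have t2dom: "\<forall>k. 0 \<le> t2$k" using Tdom[OF t2T] .
  have ext: "\<exists>d>0. (1+d) *\<^sub>R t2 - d *\<^sub>R t \<in> T" if tT: "t \<in> T" for t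
  proof -
    have "t \<in> affine hull T" using tT by (simp add: hull_inc)
    then have "\<exists>mm>1. \<forall>e. e > 1 \<and> e \<le> mm \<longrightarrow> (1 - e) *\<^sub>R t + e *\<^sub>R t2 \<in> T"
      using convex_rel_interior_if[OF convT t2] by blast
    then obtain e where e: "e > 1" "(1 - e) *\<^sub>R t + e *\<^sub>R t2 \<in> T" by blast
    have "(1 - e) *\<^sub>R t + e *\<^sub>R t2 = (1 + (e - 1)) *\<^sub>R t2 - (e - 1) *\<^sub>R t"
      by (simp add: algebra_simps)
    then show ?thesis using e by (intro exI[of _ "e - 1"]) auto
  qed
  have J: "obj t v = m t" if v: "v \<in> V" "obj t2 v = m t2" and tT: "t \<in> T" for v t
  proof -
    obtain d where d: "d > 0" "(1+d) *\<^sub>R t2 - d *\<^sub>R t \<in> T" using ext[OF tT] by blast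
    define t' where "t' = (1+d) *\<^sub>R t2 - d *\<^sub>R t"
    define u where "u = d / (1 + d)"
    have u: "0 < u" "u < 1" using d(1) by (auto simp: u_def)
    have eq: "t2 = (1-u) *\<^sub>R t' + u *\<^sub>R t"
    proof -
      have "t2$k = ((1-u) *\<^sub>R t' + u *\<^sub>R t)$k" for k
      proof -
        have "(1 - u) * (1 + d) = 1" "(1 - u) * d = u" using d(1) by (auto simp: u_def field_simps)
        moreover have "((1-u) *\<^sub>R t' + u *\<^sub>R t)$k = ((1-u)*(1+d)) * t2$k - ((1-u)*d) * t$k + u * t$k"
          by (simp add: t'_def algebra_simps)
        ultimately show ?thesis by simp
      qed
      then show ?thesis by (simp add: vec_eq_iff)
    qed
    have t'T: "t' \<in> T" using d(2) by (simp add: t'_def)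
    have mt2: "m t2 = (1-u) * m t' + u * m t" using comb[OF t'T tT] u eq by simp
    have ot2: "obj t2 v = (1-u) * obj t' v + u * obj t v" using eq obj_aff[of "1-u" u t' t v] by simp
    have g1: "m t' \<le> obj t' v" "m t \<le> obj t v" using m_le[OF v(1)] by auto
    have "(1-u) * (m t' - obj t' v) \<le> 0" using g1 u by (simp add: mult_nonneg_nonpos)
    then have "u * (obj t v - m t) \<le> 0" using mt2 ot2 v(2) by (simp add: algebra_simps)
    then have "obj t v - m t \<le> 0" using u by (simp add: mult_le_0_iff)
    then show ?thesis using g1 by simp
  qed
  have K: "t$k = 0" if k0: "t2$k = 0" and tT: "t \<in> T" for t k
  proof -
    obtain d where d: "d > 0" "(1+d) *\<^sub>R t2 - d *\<^sub>R t \<in> T" using ext[OF tT] by blast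
    have "0 \<le> ((1+d) *\<^sub>R t2 - d *\<^sub>R t)$k" using Tdom[OF d(2)] by blast
    then have "d * t$k \<le> 0" using k0 by simp
    then have "t$k \<le> 0" using d(1) by (simp add: mult_le_0_iff)
    then show ?thesis using Tdom[OF tT] by (meson antisym)
  qed
  obtain v0 where v0: "v0 \<in> V" "obj t2 v0 = m t2" using m_attained by blast
  have build: "\<exists>w. (\<forall>t\<in>T. w \<in> W_of c src tgt orig dest emb t) \<and> w \<notin> W_of c src tgt orig dest emb t1"
    if v: "v \<in> V" "obj t2 v = m t2" and r: "\<forall>k. 0 \<le> r$k" "\<forall>t\<in>T. t \<bullet> r = 0"
      and gap: "obj t1 v + t1 \<bullet> r > m t1" for v r
  proof (intro exI conjI ballI)
    define w where "w = restr emb v + r"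
    have vX: "v \<in> X" using v V_sub by blast
    then have vnn: "\<forall>e. 0 \<le> v$e" by (simp add: flow_set_def)
    show "restr emb v + r \<in> W_of c src tgt orig dest emb t" if tT: "t \<in> T" for t
    proof (rule W_in[OF Tdom[OF tT] vX])
      show "\<forall>k. restr emb v $ k \<le> (restr emb v + r) $ k" using r(1) by simp
      show "\<forall>k. 0 \<le> (restr emb v + r) $ k" using r(1) vnn by (simp add: restr_def)
      show "c \<bullet> v + t \<bullet> (restr emb v + r) = m t"
        using J[OF v tT] r(2) tT by (simp add: obj_def inner_add_right)
    qed
    show "restr emb v + r \<notin> W_of c src tgt orig dest emb t1"
    proof
      assume "restr emb v + r \<in> W_of c src tgt orig dest emb t1"
      then obtain x where x: "W_feasible src tgt orig dest emb (restr emb v + r) x"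
        "c \<bullet> x + t1 \<bullet> (restr emb v + r) \<le> m t1" using W_out[OF t1] by blast
      have "m t2 \<le> c \<bullet> x + t2 \<bullet> (restr emb v + r)" using feas_ge[OF t2dom x(1)] .
      then have "c \<bullet> v \<le> c \<bullet> x" using v(2) r(2) t2T by (simp add: obj_def inner_add_right)
      then have "obj t1 v + t1 \<bullet> r \<le> c \<bullet> x + t1 \<bullet> (restr emb v + r)"
        by (simp add: obj_def inner_add_right)
      then show False using x(2) gap by simp
    qed
  qed
  show ?thesis
  proof (cases "\<exists>k. t2$k = 0 \<and> t1$k > 0")
    case True
    then obtain k where k: "t2$k = 0" "t1$k > 0" by blast
    show ?thesis
    proof (rule build[OF v0, of "axis k 1"])
      show "\<forall>j. 0 \<le> axis k (1::real) $ j" by (simp add: axis_def)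
      show "\<forall>t\<in>T. t \<bullet> axis k 1 = 0" using K[OF k(1)] by (simp add: inner_axis)
      show "m t1 < obj t1 v0 + t1 \<bullet> axis k 1" using m_le[OF v0(1), of t1] k(2) by (simp add: inner_axis)
    qed
  next
    case nA: False
    show ?thesis
    proof (cases "\<exists>v\<in>V. obj t2 v = m t2 \<and> obj t1 v > m t1")
      case True
      then obtain v where v: "v \<in> V" "obj t2 v = m t2" "obj t1 v > m t1" by blast
      show ?thesis by (rule build[OF v(1,2), of 0]) (use v(3) in auto)
    next
      case nB: False
      have hz: "t1$k = 0" if "t2$k = 0" for k using nA that t1 by (meson antisym not_less)
      have hv: "obj t1 v = m t1" if "v \<in> V" "obj t2 v = m t2" for v
        using nB that m_le[OF that(1), of t1] by force
      have ev: "\<forall>\<^sub>F e in at_right (0::real). 0 < e \<and> (\<forall>k. 0 \<le> t2$k + e * (t2$k - t1$k))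
          \<and> (\<forall>v\<in>V. (1+e) * m t2 - e * m t1 \<le> (1+e) * obj t2 v - e * obj t1 v)"
      proof (intro eventually_conj eventually_all_finite eventually_ball_finite[OF V_finite] allI ballI)
        show "\<forall>\<^sub>F e in at_right (0::real). 0 < e" by (rule eventually_at_right_less)
      next
        fix k
        show "\<forall>\<^sub>F e in at_right (0::real). 0 \<le> t2$k + e * (t2$k - t1$k)"
        proof (cases "t2$k = 0")
          case True then show ?thesis using hz[OF True] by simp
        next
          case False
          have "0 \<le> t2$k" using t2dom by blast
          then have "t2$k > 0" using False by linarith
          then show ?thesis by (rule ev_pos)
        qed
      next
        fix v assume vV: "v \<in> V"
        show "\<forall>\<^sub>F e in at_right (0::real). (1+e) * m t2 - e * m t1 \<le> (1+e) * obj t2 v - e * obj t1 v"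
        proof (cases "obj t2 v = m t2")
          case True then show ?thesis using hv[OF vV True] by simp
        next
          case False
          then have A: "obj t2 v - m t2 > 0" using m_le[OF vV, of t2] by simp
          show ?thesis
          proof (rule eventually_mono[OF ev_pos[OF A, of "(obj t2 v - m t2) - (obj t1 v - m t1)"]])
            fix e :: real
            assume h: "0 \<le> obj t2 v - m t2 + e * (obj t2 v - m t2 - (obj t1 v - m t1))"
            have "obj t2 v - m t2 + e * (obj t2 v - m t2 - (obj t1 v - m t1))
                = ((1+e) * obj t2 v - e * obj t1 v) - ((1+e) * m t2 - e * m t1)" by (simp add: algebra_simps)
            then show "(1+e) * m t2 - e * m t1 \<le> (1+e) * obj t2 v - e * obj t1 v" using h by linarith
          qed
        qed
      qed
      have "at_right (0::real) \<noteq> bot" by simp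
      from eventually_happens'[OF this ev] obtain e where e: "0 < e"
        "\<forall>k. 0 \<le> t2$k + e * (t2$k - t1$k)"
        "\<forall>v\<in>V. (1+e) * m t2 - e * m t1 \<le> (1+e) * obj t2 v - e * obj t1 v" by blast
      define t3 where "t3 = (1+e) *\<^sub>R t2 + (-e) *\<^sub>R t1"
      define mu where "mu = (1+e) * m t2 - e * m t1"
      have t3dom: "\<forall>k. 0 \<le> t3$k"
      proof
        fix k
        have "t3$k = t2$k + e * (t2$k - t1$k)" by (simp add: t3_def algebra_simps)
        then show "0 \<le> t3$k" using e(2) by simp
      qed
      have "mu \<le> m t3"
      proof -
        obtain v3 where v3: "v3 \<in> V" "obj t3 v3 = m t3" using m_attained by blast
        have "obj t3 v3 = (1+e) * obj t2 v3 + (-e) * obj t1 v3" unfolding t3_def by (rule obj_aff) simp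
        then show ?thesis using e(3) v3 by (simp add: mu_def)
      qed
      then have E3: "(t3, - mu) \<in> E" using t3dom by (simp add: E_iff)
      have E1: "(t1, - m t1) \<in> E" using t1 by (simp add: E_iff)
      have G2: "(t2, - m t2) \<in> F" using graph[OF t2T] .
      have "(t2, - m t2) \<in> open_segment (t3, - mu) (t1, - m t1)"
        unfolding in_segment(2)
      proof (intro conjI exI[of _ "e / (1 + e)"])
        show "(t3, - mu) \<noteq> (t1, - m t1)"
        proof
          assume "(t3, - mu) = (t1, - m t1)"
          then have "t3 = t1" by simp
          have "t2 = t1"
          proof -
            have "t2$k = t1$k" for k
            proof -
              have "t3$k = t1$k" using \<open>t3 = t1\<close> by simp
              then have "(1+e) * (t2$k - t1$k) = 0" by (simp add: t3_def algebra_simps)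
              then show ?thesis using e(1) by simp
            qed
            then show ?thesis by (simp add: vec_eq_iff)
          qed
          then show False using t2T t1T by simp
        qed
        show "0 < e / (1 + e)" "e / (1 + e) < 1" using e(1) by auto
        have ce: "1 - e / (1 + e) = 1 / (1 + e)" using e(1) by (simp add: field_simps)
        have "t2$k = ((1 - e / (1 + e)) *\<^sub>R t3 + (e / (1 + e)) *\<^sub>R t1)$k" for k
        proof -
          define a where "a = 1 / (1 + e)"
          have a1: "(1 + e) * a = 1" "e / (1 + e) = e * a" "1 - e * a = a" using e(1) ce by (auto simp: a_def)
          have "((1 - e / (1 + e)) *\<^sub>R t3 + (e / (1 + e)) *\<^sub>R t1)$k
              = a * ((1+e) * t2$k - e * t1$k) + e * a * t1$k"
            unfolding a1(2) a1(3) by (simp add: t3_def)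
          also have "\<dots> = ((1 + e) * a) * t2$k" by (simp add: algebra_simps)
          also have "\<dots> = t2$k" using a1 by simp
          finally show ?thesis by simp
        qed
        then have v: "t2 = (1 - e / (1 + e)) *\<^sub>R t3 + (e / (1 + e)) *\<^sub>R t1" by (simp add: vec_eq_iff)
        define a where "a = 1 / (1 + e)"
        have a1: "(1 + e) * a = 1" "e / (1 + e) = e * a" "1 - e * a = a" using e(1) ce by (auto simp: a_def)
        have "(1 - e / (1 + e)) * (- mu) + (e / (1 + e)) * (- m t1)
              = a * (- ((1+e) * m t2 - e * m t1)) + e * a * (- m t1)"
          unfolding a1(2) a1(3) by (simp add: mu_def)
        also have "\<dots> = - (((1 + e) * a) * m t2)" by (simp add: algebra_simps)
        also have "\<dots> = - m t2" using a1 by simp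
        finally have z: "(1 - e / (1 + e)) * (- mu) + (e / (1 + e)) * (- m t1) = - m t2" .
        show "(t2, - m t2) = (1 - e / (1 + e)) *\<^sub>R (t3, - mu) + (e / (1 + e)) *\<^sub>R (t1, - m t1)"
          using v z by simp
      qed
      then have "(t1, - m t1) \<in> F" using F E3 E1 G2 unfolding face_of_def by blast
      then have "t1 \<in> T" using T by blast
      then show ?thesis using t1T by blast
    qed
  qed
qed

end


theorem corollary1:
  fixes c :: "real^'a::finite"
    and src tgt :: "'a \<Rightarrow> 'v"
    and orig dest :: 'v
    and emb :: "'t::finite \<Rightarrow> 'a"
    and T1 T2 :: "((real^'t) set)"
  assumes "\<forall>e. 0 \<le> c $ e"
    and "inj emb"
    and "range emb \<noteq> UNIV"
    and "orig \<noteq> dest"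
    and "(orig, dest) \<in> {(src e, tgt e) | e. e \<notin> range emb}\<^sup>*"
    and "action_set c src tgt orig dest emb T1"
    and "action_set c src tgt orig dest emb T2"
  shows "T1 \<subseteq> T2 \<longleftrightarrow>
           W_set c src tgt orig dest emb T2 \<subseteq> W_set c src tgt orig dest emb T1"
proof -
  interpret netw c src tgt orig dest emb using assms(1,2,4,5) by unfold_locales
  show ?thesis
  proof
    assume "T1 \<subseteq> T2"
    then show "W_set c src tgt orig dest emb T2 \<subseteq> W_set c src tgt orig dest emb T1"
      unfolding W_set_def by blast
  next
    assume Wsub: "W_set c src tgt orig dest emb T2 \<subseteq> W_set c src tgt orig dest emb T1"
    show "T1 \<subseteq> T2"
    proof
      fix t1 assume t1T1: "t1 \<in> T1"
      show "t1 \<in> T2"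
      proof (rule ccontr)
        assume t1T: "t1 \<notin> T2"
        obtain F1 where F1: "F1 face_of E" "T1 = {t. \<exists>z. (t, z) \<in> F1}"
          using assms(6) unfolding action_set_def by blast
        obtain z1 where "(t1, z1) \<in> F1" using t1T1 F1(2) by blast
        then have "(t1, z1) \<in> E" using F1(1) face_of_imp_subset by blast
        then have t1: "\<forall>k. 0 \<le> t1$k" by (simp add: E_iff)
        obtain F2 where F2: "F2 face_of E" "(0::real^'t, 1::real) \<notin> aff_dir F2"
          "T2 = {t. \<exists>z. (t, z) \<in> F2}"
          using assms(7) unfolding action_set_def by blast
        show False
        proof (cases "T2 = {}")
          case True
          have "((\<chi> k. -1) :: real^'t) \<in> W_set c src tgt orig dest emb T2" using True by (simp add: W_set_def)
          then have "((\<chi> k. -1) :: real^'t) \<in> W_of c src tgt orig dest emb t1" using Wsub t1T1 by (auto simp: W_set_def)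
          then show False by (auto simp: W_of_def W_feasible_def)
        next
          case False
          obtain w where w: "\<forall>t\<in>T2. w \<in> W_of c src tgt orig dest emb t" "w \<notin> W_of c src tgt orig dest emb t1"
            using key[OF F2 False t1 t1T] by blast
          then have "w \<in> W_set c src tgt orig dest emb T2" by (simp add: W_set_def)
          then have "w \<in> W_of c src tgt orig dest emb t1" using Wsub t1T1 by (auto simp: W_set_def)
          then show False using w(2) by blast
        qed
      qed
    qed
  qed
qed

end
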